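(* Let $\gamma:[0,l]\times[0,w)\to E_1^4$, $(s,t)\mapsto\gamma(s,t)$, be a smooth inextensible one-parameter family of partially null curves in $E_1^4$ parametrized by arclength, i.e. $\left\|\frac{\partial\gamma}{\partial s}\right\|\equiv1$, with Frenet frame $\{T,N,B_1,B_2\}$, curvatures $k_1,k_2$ (and $k_3\equiv0$), and write $$\frac{\partial\gamma}{\partial t}=\beta_1T+\beta_2N+\beta_3B_1+\beta_4B_2$$ with smooth scalar functions $\beta_i$. Put $\psi_1=\langle\frac{\partial N}{\partial t},B_1\rangle$, $\psi_2=\langle\frac{\partial N}{\partial t},B_2\rangle$, $\psi_3=\langle\frac{\partial B_1}{\partial t},B_2\rangle$. Then $$\frac{\partial T}{\partial t}=\Big(\frac{\partial\beta_2}{\partial s}+\beta_1k_1-\beta_4k_2\Big)N+\Big(\frac{\partial\beta_3}{\partial s}+\beta_2k_2\Big)B_1+\frac{\partial\beta_4}{\partial s}B_2,$$ $$\frac{\partial N}{\partial t}=-\Big(\frac{\partial\beta_2}{\partial s}+\beta_1k_1-\beta_4k_2\Big)T+\psi_2B_1+\psi_1B_2,$$ $$\frac{\partial B_1}{\partial t}=-\frac{\partial\beta_4}{\partial s}T-\psi_1N+\psi_3B_1,$$ $$\frac{\partial B_2}{\partial t}=-\Big(\frac{\partial\beta_3}{\partial s}+k_2\beta_2\Big)T-\psi_2N-\psi_3B_2.$$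
   Context: $E_1^4$ is $\mathbb{R}^4$ with the Lorentzian metric $\langle x,y\rangle=-x_1y_1+x_2y_2+x_3y_3+x_4y_4$ and $\|x\|=\sqrt{|\langle x,x\rangle|}$. A partially null curve is a spacelike curve whose first binormal is a null vector. For such a curve parametrized by arclength $s$, its Frenet frame $\{T,N,B_1,B_2\}$ ($T=\partial\gamma/\partial s$) satisfies $\langle T,T\rangle=\langle N,N\rangle=1$, $\langle B_1,B_1\rangle=\langle B_2,B_2\rangle=0$, $\langle B_1,B_2\rangle=1$, all other inner products zero, and the Frenet equations $T'=k_1N$, $N'=-k_1T+k_2B_1$, $B_1'=k_3B_1$, $B_2'=-k_2N-k_3B_2$, with $k_3\equiv0$. In the family, each $s\mapsto\gamma(s,t)$ is such a curve and frame and curvatures are smooth in $(s,t)$. The flow is inextensible if $\frac{\partial}{\partial t}\|\partial\gamma/\partial u\|=0$; with the arclength parametrization $\|\partial\gamma/\partial s\|\equiv1$ for all $t$. *)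

theory Defs
  imports "HOL-Analysis.Analysis"
begin

definition lor :: "real^4 \<Rightarrow> real^4 \<Rightarrow> real" where
  "lor x y = - (x$1 * y$1) + x$2 * y$2 + x$3 * y$3 + x$4 * y$4"

definition lnorm :: "real^4 \<Rightarrow> real" where
  "lnorm x = sqrt \<bar>lor x x\<bar>"

fun Ck_on :: "nat \<Rightarrow> 'a::real_normed_vector set \<Rightarrow> ('a \<Rightarrow> 'b::real_normed_vector) \<Rightarrow> bool" where
  "Ck_on 0 U f = continuous_on U f"
| "Ck_on (Suc n) U f =
     (\<exists>f'. (\<forall>x\<in>U. (f has_derivative f' x) (at x)) \<and> (\<forall>v. Ck_on n U (\<lambda>x. f' x v)))"

definition smooth_on :: "'a::real_normed_vector set \<Rightarrow> ('a \<Rightarrow> 'b::real_normed_vector) \<Rightarrow> bool" where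
  "smooth_on U f \<longleftrightarrow> (\<forall>n. Ck_on n U f)"

definition d_s :: "(real \<Rightarrow> real \<Rightarrow> 'b::real_normed_vector) \<Rightarrow> real \<Rightarrow> real \<Rightarrow> 'b" where
  "d_s f s t = vector_derivative (\<lambda>x. f x t) (at s)"

definition d_t :: "(real \<Rightarrow> real \<Rightarrow> 'b::real_normed_vector) \<Rightarrow> real \<Rightarrow> real \<Rightarrow> 'b" where
  "d_t f s t = vector_derivative (\<lambda>y. f s y) (at t)"

end

theory Submission
  imports Defs
begin


lemma lor_sym: "lor x y = lor y x" by (simp add: lor_def algebra_simps)
lemma lor_add_left[simp]: "lor (x + y) z = lor x z + lor y z" by (simp add: lor_def algebra_simps)
lemma lor_add_right[simp]: "lor z (x + y) = lor z x + lor z y" by (simp add: lor_def algebra_simps)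
lemma lor_diff_left[simp]: "lor (x - y) z = lor x z - lor y z" by (simp add: lor_def algebra_simps)
lemma lor_diff_right[simp]: "lor z (x - y) = lor z x - lor z y" by (simp add: lor_def algebra_simps)
lemma lor_minus_left[simp]: "lor (- x) z = - lor x z" by (simp add: lor_def algebra_simps)
lemma lor_minus_right[simp]: "lor z (- x) = - lor z x" by (simp add: lor_def algebra_simps)
lemma lor_scaleR_left[simp]: "lor (a *\<^sub>R x) z = a * lor x z" by (simp add: lor_def algebra_simps)
lemma lor_scaleR_right[simp]: "lor z (a *\<^sub>R x) = a * lor z x" by (simp add: lor_def algebra_simps)
lemma lor_zero_left[simp]: "lor 0 z = 0" by (simp add: lor_def)
lemma lor_zero_right[simp]: "lor z 0 = 0" by (simp add: lor_def)
lemma lor_sum_right: "finite S \<Longrightarrow> lor z (\<Sum>v\<in>S. f v) = (\<Sum>v\<in>S. lor z (f v))"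
  by (induction S rule: finite_induct) auto

lemma lor_nondeg:
  assumes "\<And>e. lor y e = 0" shows "y = 0"
proof -
  have "lor y (axis 1 1) = - y$1" "lor y (axis 2 1) = y$2" "lor y (axis 3 1) = y$3" "lor y (axis 4 1) = y$4"
    by (simp_all add: lor_def axis_def)
  then show ?thesis using assms by (simp add: vec_eq_iff forall_4)
qed

lemma frame_decomp:
  fixes T N B1 B2 Z :: "real^4"
  assumes fr: "lor T T = 1" "lor N N = 1" "lor B1 B1 = 0" "lor B2 B2 = 0" "lor B1 B2 = 1"
     "lor T N = 0" "lor T B1 = 0" "lor T B2 = 0" "lor N B1 = 0" "lor N B2 = 0"
  shows "Z = lor Z T *\<^sub>R T + lor Z N *\<^sub>R N + lor Z B2 *\<^sub>R B1 + lor Z B1 *\<^sub>R B2"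
proof -
  have fr2: "lor N T = 0" "lor B1 T = 0" "lor B2 T = 0" "lor B1 N = 0" "lor B2 N = 0" "lor B2 B1 = 1"
    using fr by (simp_all add: lor_sym)
  let ?S = "{T, N, B1, B2}"
  have ne: "T \<noteq> N" "T \<noteq> B1" "T \<noteq> B2" "N \<noteq> B1" "N \<noteq> B2" "B1 \<noteq> B2"
    using fr by auto
  have ind: "independent ?S"
  proof
    assume "dependent ?S"
    then obtain u where u: "\<exists>v\<in>?S. u v \<noteq> 0" "(\<Sum>v\<in>?S. u v *\<^sub>R v) = 0"
      using dependent_finite[of ?S] by auto
    have s: "(\<Sum>v\<in>?S. u v *\<^sub>R v) = u T *\<^sub>R T + u N *\<^sub>R N + u B1 *\<^sub>R B1 + u B2 *\<^sub>R B2"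
      using ne by (simp add: algebra_simps)
    have e: "u T *\<^sub>R T + u N *\<^sub>R N + u B1 *\<^sub>R B1 + u B2 *\<^sub>R B2 = 0" using u s by simp
    have "lor (u T *\<^sub>R T + u N *\<^sub>R N + u B1 *\<^sub>R B1 + u B2 *\<^sub>R B2) T = u T"
      "lor (u T *\<^sub>R T + u N *\<^sub>R N + u B1 *\<^sub>R B1 + u B2 *\<^sub>R B2) N = u N"
      "lor (u T *\<^sub>R T + u N *\<^sub>R N + u B1 *\<^sub>R B1 + u B2 *\<^sub>R B2) B1 = u B2"
      "lor (u T *\<^sub>R T + u N *\<^sub>R N + u B1 *\<^sub>R B1 + u B2 *\<^sub>R B2) B2 = u B1"
      using fr fr2 by simp_all
    then have "u T = 0" "u N = 0" "u B2 = 0" "u B1 = 0" unfolding e by simp_all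
    then show False using u(1) by auto
  qed
  have "card ?S = 4" using ne by auto
  then have "UNIV \<subseteq> span ?S"
    by (intro card_ge_dim_independent ind) auto
  define Y where "Y = Z - (lor Z T *\<^sub>R T + lor Z N *\<^sub>R N + lor Z B2 *\<^sub>R B1 + lor Z B1 *\<^sub>R B2)"
  have Y: "lor Y v = 0" if "v \<in> ?S" for v
    using that fr unfolding Y_def
    by (auto simp: fr2)
  have "lor Y e = 0" for e
  proof -
    have "e \<in> span ?S" using \<open>UNIV \<subseteq> span ?S\<close> by auto
    then obtain u where "e = (\<Sum>v\<in>?S. u v *\<^sub>R v)" using span_finite[of ?S] by auto
    then show ?thesis using Y by (simp add: lor_sum_right)
  qed
  then have "Y = 0" by (rule lor_nondeg)
  then show ?thesis unfolding Y_def by simp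
qed


lemma clairaut_real:
  fixes F Fs Ft Fst Fts :: "real \<times> real \<Rightarrow> real"
  assumes U: "open U" "(s0,t0) \<in> U"
  and hs: "\<And>x y. (x,y) \<in> U \<Longrightarrow> ((\<lambda>x. F (x,y)) has_real_derivative Fs (x,y)) (at x)"
  and ht: "\<And>x y. (x,y) \<in> U \<Longrightarrow> ((\<lambda>y. F (x,y)) has_real_derivative Ft (x,y)) (at y)"
  and hst: "\<And>x y. (x,y) \<in> U \<Longrightarrow> ((\<lambda>y. Fs (x,y)) has_real_derivative Fst (x,y)) (at y)"
  and hts: "\<And>x y. (x,y) \<in> U \<Longrightarrow> ((\<lambda>x. Ft (x,y)) has_real_derivative Fts (x,y)) (at x)"
  and c: "continuous_on U Fst" "continuous_on U Fts"
  shows "Fst (s0,t0) = Fts (s0,t0)"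
proof (rule ccontr)
  assume ne: "Fst (s0,t0) \<noteq> Fts (s0,t0)"
  define e where "e = \<bar>Fst (s0,t0) - Fts (s0,t0)\<bar> / 2"
  have e: "e > 0" using ne by (simp add: e_def)
  obtain r where r: "r > 0" "ball (s0,t0) r \<subseteq> U" using U open_contains_ball by blast
  have "continuous (at (s0,t0)) Fst" using c U continuous_on_eq_continuous_at by blast
  then obtain d1 where d1: "d1>0" "\<And>p. dist p (s0,t0) < d1 \<Longrightarrow> dist (Fst p) (Fst (s0,t0)) < e"
    using e unfolding continuous_at_eps_delta by metis
  have "continuous (at (s0,t0)) Fts" using c U continuous_on_eq_continuous_at by blast
  then obtain d2 where d2: "d2>0" "\<And>p. dist p (s0,t0) < d2 \<Longrightarrow> dist (Fts p) (Fts (s0,t0)) < e"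
    using e unfolding continuous_at_eps_delta by metis
  define h where "h = min r (min d1 d2) / 3"
  have h: "h > 0" using r d1 d2 by (simp add: h_def)
  have box: "dist (x,y) (s0,t0) < min r (min d1 d2)"
    if "s0 \<le> x" "x \<le> s0+h" "t0 \<le> y" "y \<le> t0+h" for x y
  proof -
    have "dist (x,y) (s0,t0) = sqrt ((x - s0)^2 + (y - t0)^2)"
      by (simp add: dist_prod_def dist_real_def power2_abs)
    also have "\<dots> \<le> \<bar>x - s0\<bar> + \<bar>y - t0\<bar>" by (rule sqrt_sum_squares_le_sum_abs)
    also have "\<dots> \<le> 2*h" using that by simp
    also have "\<dots> < min r (min d1 d2)" using h unfolding h_def by linarith
    finally show ?thesis .
  qed
  have inU: "(x,y) \<in> U" if "s0 \<le> x" "x \<le> s0+h" "t0 \<le> y" "y \<le> t0+h" for x y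
  proof -
    have "dist (s0,t0) (x,y) < r" using box[OF that] by (simp add: dist_commute)
    then show ?thesis using r by auto
  qed
  define D where "D = F (s0+h,t0+h) - F (s0+h,t0) - F (s0,t0+h) + F (s0,t0)"
  have "\<exists>z. s0 < z \<and> z < s0+h \<and> (F (s0+h,t0+h) - F (s0+h,t0)) - (F (s0,t0+h) - F (s0,t0))
           = (s0+h - s0) * (Fs (z,t0+h) - Fs (z,t0))"
    using h by (intro MVT2[where f="\<lambda>x. F (x,t0+h) - F (x,t0)"]) (auto intro!: DERIV_diff hs inU)
  then obtain \<xi> where \<xi>: "s0 < \<xi>" "\<xi> < s0+h" "D = h * (Fs (\<xi>,t0+h) - Fs (\<xi>,t0))"
    unfolding D_def by (auto simp: algebra_simps)
  have "\<exists>z. t0 < z \<and> z < t0+h \<and> Fs (\<xi>,t0+h) - Fs (\<xi>,t0) = (t0+h - t0) * Fst (\<xi>,z)"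
    using h \<xi> by (intro MVT2[where f="\<lambda>y. Fs (\<xi>,y)"]) (auto intro!: hst inU)
  then obtain \<eta> where \<eta>: "t0 < \<eta>" "\<eta> < t0+h" "D = h * h * Fst (\<xi>,\<eta>)"
    using \<xi> by auto
  have "\<exists>z. t0 < z \<and> z < t0+h \<and> (F (s0+h,t0+h) - F (s0,t0+h)) - (F (s0+h,t0) - F (s0,t0))
           = (t0+h - t0) * (Ft (s0+h,z) - Ft (s0,z))"
    using h by (intro MVT2[where f="\<lambda>y. F (s0+h,y) - F (s0,y)"]) (auto intro!: DERIV_diff ht inU)
  then obtain \<eta>' where \<eta>': "t0 < \<eta>'" "\<eta>' < t0+h" "D = h * (Ft (s0+h,\<eta>') - Ft (s0,\<eta>'))"
    unfolding D_def by (auto simp: algebra_simps)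
  have "\<exists>z. s0 < z \<and> z < s0+h \<and> Ft (s0+h,\<eta>') - Ft (s0,\<eta>') = (s0+h - s0) * Fts (z,\<eta>')"
    using h \<eta>' by (intro MVT2[where f="\<lambda>x. Ft (x,\<eta>')"]) (auto intro!: hts inU)
  then obtain \<xi>' where \<xi>': "s0 < \<xi>'" "\<xi>' < s0+h" "D = h * h * Fts (\<xi>',\<eta>')"
    using \<eta>' by auto
  have eq: "Fst (\<xi>,\<eta>) = Fts (\<xi>',\<eta>')" using \<eta>(3) \<xi>'(3) h by simp
  have "dist (Fst (\<xi>,\<eta>)) (Fst (s0,t0)) < e"
    using box[of \<xi> \<eta>] \<xi> \<eta> by (intro d1) auto
  moreover have "dist (Fts (\<xi>',\<eta>')) (Fts (s0,t0)) < e"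
    using box[of \<xi>' \<eta>'] \<xi>' \<eta>' by (intro d2) auto
  ultimately have lt: "\<bar>Fst (\<xi>,\<eta>) - Fst (s0,t0)\<bar> + \<bar>Fts (\<xi>',\<eta>') - Fts (s0,t0)\<bar> < \<bar>Fst (s0,t0) - Fts (s0,t0)\<bar>"
    unfolding e_def dist_real_def using add_strict_mono by fastforce
  have "\<bar>Fst (s0,t0) - Fts (s0,t0)\<bar> \<le> \<bar>Fst (\<xi>,\<eta>) - Fst (s0,t0)\<bar> + \<bar>Fts (\<xi>',\<eta>') - Fts (s0,t0)\<bar>"
    unfolding eq by (simp add: abs_if split: if_splits)
  then show False using lt by linarith
qed


lemma pd_from_frechet:
  fixes G :: "real \<times> real \<Rightarrow> 'c::real_normed_vector" and x y :: real
  assumes "(G has_derivative G') (at (x,y))"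
  shows "((\<lambda>x. G (x,y)) has_vector_derivative G' (1,0)) (at x)"
    "((\<lambda>y. G (x,y)) has_vector_derivative G' (0,1)) (at y)"
proof -
  have lin: "linear G'" using assms has_derivative_linear by blast
  have p1: "((\<lambda>x. (x,y)) has_derivative (\<lambda>h. (h,0))) (at x)"
    by (intro has_derivative_Pair has_derivative_ident has_derivative_const)
  have "((\<lambda>x. G (x,y)) has_derivative (\<lambda>h. G' (h,0))) (at x)"
    using has_derivative_compose[OF p1, of G G'] assms by simp
  moreover have "(\<lambda>h. G' (h,0)) = (\<lambda>h. h *\<^sub>R G' (1,0))"
  proof
    fix h :: real
    have "G' (h,0) = G' (h *\<^sub>R (1,0))" by simp
    also have "\<dots> = h *\<^sub>R G' (1,0)" by (rule linear_cmul[OF lin])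
    finally show "G' (h,0) = h *\<^sub>R G' (1,0)" .
  qed
  ultimately show "((\<lambda>x. G (x,y)) has_vector_derivative G' (1,0)) (at x)"
    by (simp add: has_vector_derivative_def)
  have p2: "((\<lambda>y. (x,y)) has_derivative (\<lambda>h. (0,h))) (at y)"
    by (intro has_derivative_Pair has_derivative_ident has_derivative_const)
  have "((\<lambda>y. G (x,y)) has_derivative (\<lambda>h. G' (0,h))) (at y)"
    using has_derivative_compose[OF p2, of G G'] assms by simp
  moreover have "(\<lambda>h. G' (0,h)) = (\<lambda>h. h *\<^sub>R G' (0,1))"
  proof
    fix h :: real
    have "G' (0,h) = G' (h *\<^sub>R (0,1))" by simp
    also have "\<dots> = h *\<^sub>R G' (0,1)" by (rule linear_cmul[OF lin])
    finally show "G' (0,h) = h *\<^sub>R G' (0,1)" .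
  qed
  ultimately show "((\<lambda>y. G (x,y)) has_vector_derivative G' (0,1)) (at y)"
    by (simp add: has_vector_derivative_def)
qed



lemma Ck_partials:
  fixes f :: "real \<Rightarrow> real \<Rightarrow> 'b::real_normed_vector"
  assumes "Ck_on (Suc n) U (\<lambda>p. f (fst p) (snd p))" "(s,t) \<in> U"
  shows "((\<lambda>x. f x t) has_vector_derivative d_s f s t) (at s)"
    "((\<lambda>y. f s y) has_vector_derivative d_t f s t) (at t)"
proof -
  from assms(1) obtain f' where f': "\<forall>x\<in>U. ((\<lambda>p. f (fst p) (snd p)) has_derivative f' x) (at x)"
    by auto
  then have d: "((\<lambda>p. f (fst p) (snd p)) has_derivative f' (s,t)) (at (s,t))" using assms(2) by auto
  from pd_from_frechet[OF d] have
    "((\<lambda>x. f x t) has_vector_derivative f' (s,t) (1,0)) (at s)"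
    "((\<lambda>y. f s y) has_vector_derivative f' (s,t) (0,1)) (at t)" by simp_all
  then show "((\<lambda>x. f x t) has_vector_derivative d_s f s t) (at s)"
    "((\<lambda>y. f s y) has_vector_derivative d_t f s t) (at t)"
    unfolding d_s_def d_t_def by (simp_all add: vector_derivative_at)
qed

lemma smooth_partials:
  fixes f :: "real \<Rightarrow> real \<Rightarrow> 'b::real_normed_vector"
  assumes "smooth_on U (\<lambda>p. f (fst p) (snd p))" "(s,t) \<in> U"
  shows "((\<lambda>x. f x t) has_vector_derivative d_s f s t) (at s)"
    "((\<lambda>y. f s y) has_vector_derivative d_t f s t) (at t)"
  using assms Ck_partials[of 0 U f s t] unfolding smooth_on_def by blast+

lemma inner_vd:
  fixes X :: "real \<Rightarrow> 'b::real_inner"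
  assumes "(X has_vector_derivative X') (at x)"
  shows "((\<lambda>x. X x \<bullet> v) has_real_derivative X' \<bullet> v) (at x)"
  using bounded_linear.has_vector_derivative[OF bounded_linear_inner_left assms, of v]
  by (simp add: has_real_derivative_iff_has_vector_derivative)

lemma clairaut:
  fixes f :: "real \<Rightarrow> real \<Rightarrow> 'b::real_inner"
  assumes C2: "Ck_on (Suc (Suc 0)) U (\<lambda>p. f (fst p) (snd p))" and U: "open U" "(s,t) \<in> U"
  shows "\<exists>A. ((\<lambda>y. d_s f s y) has_vector_derivative A) (at t) \<and>
             ((\<lambda>x. d_t f x t) has_vector_derivative A) (at s)"
proof -
  from C2 obtain f' where f': "\<forall>x\<in>U. ((\<lambda>p. f (fst p) (snd p)) has_derivative f' x) (at x)"
    and c1: "\<forall>v. Ck_on (Suc 0) U (\<lambda>x. f' x v)"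
    by auto
  from c1[rule_format, of "(1,0)"] obtain g1 where
    g1: "\<forall>x\<in>U. ((\<lambda>x. f' x (1,0)) has_derivative g1 x) (at x)" "\<forall>v. continuous_on U (\<lambda>x. g1 x v)"
    by auto
  from c1[rule_format, of "(0,1)"] obtain g2 where
    g2: "\<forall>x\<in>U. ((\<lambda>x. f' x (0,1)) has_derivative g2 x) (at x)" "\<forall>v. continuous_on U (\<lambda>x. g2 x v)"
    by auto
  have P1: "((\<lambda>x. f x y) has_vector_derivative f' (x,y) (1,0)) (at x)"
   and P2: "((\<lambda>y. f x y) has_vector_derivative f' (x,y) (0,1)) (at y)"
   and P3: "((\<lambda>y. f' (x,y) (1,0)) has_vector_derivative g1 (x,y) (0,1)) (at y)"
   and P4: "((\<lambda>x. f' (x,y) (0,1)) has_vector_derivative g2 (x,y) (1,0)) (at x)"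
    if "(x,y) \<in> U" for x y
  proof -
    have d: "((\<lambda>p. f (fst p) (snd p)) has_derivative f' (x,y)) (at (x,y))" using f' that by auto
    show "((\<lambda>x. f x y) has_vector_derivative f' (x,y) (1,0)) (at x)"
      using pd_from_frechet(1)[OF d] by simp
    show "((\<lambda>y. f x y) has_vector_derivative f' (x,y) (0,1)) (at y)"
      using pd_from_frechet(2)[OF d] by simp
    show "((\<lambda>y. f' (x,y) (1,0)) has_vector_derivative g1 (x,y) (0,1)) (at y)"
      using pd_from_frechet(2)[of "\<lambda>x. f' x (1,0)"] g1(1) that by auto
    show "((\<lambda>x. f' (x,y) (0,1)) has_vector_derivative g2 (x,y) (1,0)) (at x)"
      using pd_from_frechet(1)[of "\<lambda>x. f' x (0,1)"] g2(1) that by auto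
  qed
  have eqv: "g1 (s,t) (0,1) \<bullet> v = g2 (s,t) (1,0) \<bullet> v" for v
  proof -
    have "(\<lambda>p. g1 p (0,1) \<bullet> v) (s,t) = (\<lambda>p. g2 p (1,0) \<bullet> v) (s,t)"
    proof (rule clairaut_real[OF U, where F="\<lambda>p. f (fst p) (snd p) \<bullet> v"
          and Fs="\<lambda>p. f' p (1,0) \<bullet> v" and Ft="\<lambda>p. f' p (0,1) \<bullet> v"])
      fix x y assume xy: "(x,y) \<in> U"
      show "((\<lambda>x. f (fst (x, y)) (snd (x, y)) \<bullet> v) has_real_derivative f' (x, y) (1, 0) \<bullet> v) (at x)"
        using inner_vd[OF P1[OF xy]] by simp
      show "((\<lambda>y. f (fst (x, y)) (snd (x, y)) \<bullet> v) has_real_derivative f' (x, y) (0, 1) \<bullet> v) (at y)"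
        using inner_vd[OF P2[OF xy]] by simp
      show "((\<lambda>y. f' (x, y) (1, 0) \<bullet> v) has_real_derivative g1 (x, y) (0, 1) \<bullet> v) (at y)"
        using inner_vd[OF P3[OF xy]] by simp
      show "((\<lambda>x. f' (x, y) (0, 1) \<bullet> v) has_real_derivative g2 (x, y) (1, 0) \<bullet> v) (at x)"
        using inner_vd[OF P4[OF xy]] by simp
    next
      show "continuous_on U (\<lambda>p. g1 p (0, 1) \<bullet> v)"
        using g1(2) by (intro continuous_intros) auto
      show "continuous_on U (\<lambda>p. g2 p (1, 0) \<bullet> v)"
        using g2(2) by (intro continuous_intros) auto
    qed
    then show ?thesis by simp
  qed
  have eq: "g1 (s,t) (0,1) = g2 (s,t) (1,0)"
  proof -
    let ?a = "g1 (s,t) (0,1)" and ?b = "g2 (s,t) (1,0)"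
    have "(?a - ?b) \<bullet> (?a - ?b) = ?a \<bullet> (?a - ?b) - ?b \<bullet> (?a - ?b)" by (rule inner_diff_left)
    also have "\<dots> = 0" using eqv[of "?a - ?b"] by simp
    finally show ?thesis by simp
  qed
  define S1 where "S1 = (\<lambda>y. (s,y)) -` U"
  define S2 where "S2 = (\<lambda>x. (x,t)) -` U"
  have oS1: "open S1" unfolding S1_def
    by (rule continuous_open_vimage[OF U(1)]) (intro continuous_intros)
  have oS2: "open S2" unfolding S2_def
    by (rule continuous_open_vimage[OF U(1)]) (intro continuous_intros)
  have "((\<lambda>y. d_s f s y) has_vector_derivative g1 (s,t) (0,1)) (at t)"
  proof (rule has_vector_derivative_transform_within_open[OF P3[OF U(2)] oS1])
    show "t \<in> S1" using U unfolding S1_def by simp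
    fix y assume "y \<in> S1"
    then have "(s,y) \<in> U" unfolding S1_def by simp
    then show "f' (s, y) (1, 0) = d_s f s y"
      unfolding d_s_def using vector_derivative_at[OF P1[of s y]] by simp
  qed
  moreover have "((\<lambda>x. d_t f x t) has_vector_derivative g1 (s,t) (0,1)) (at s)"
    unfolding eq
  proof (rule has_vector_derivative_transform_within_open[OF P4[OF U(2)] oS2])
    show "s \<in> S2" using U unfolding S2_def by simp
    fix x assume "x \<in> S2"
    then have "(x,t) \<in> U" unfolding S2_def by simp
    then show "f' (x, t) (0, 1) = d_t f x t"
      unfolding d_t_def using vector_derivative_at[OF P2[of x t]] by simp
  qed
  ultimately show ?thesis by blast
qed

lemma vd_eq_within:
  fixes f g :: "real \<Rightarrow> 'b::real_normed_vector"
  assumes "(f has_vector_derivative f') (at x)" "(g has_vector_derivative g') (at x)"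
    "x \<in> S" "\<And>y. y \<in> S \<Longrightarrow> f y = g y" "x islimpt S"
  shows "f' = g'"
proof -
  have "(f has_vector_derivative f') (at x within S)"
    using assms(1) by (rule has_vector_derivative_at_within)
  then have "(g has_vector_derivative f') (at x within S)"
    by (rule has_vector_derivative_transform_within[OF _ zero_less_one assms(3)]) (use assms(4) in auto)
  moreover have "(g has_vector_derivative g') (at x within S)"
    using assms(2) by (rule has_vector_derivative_at_within)
  moreover have "at x within S \<noteq> bot"
    using assms(5) trivial_limit_within by blast
  ultimately show ?thesis using vector_derivative_unique_within by blast
qed



lemma lor_vd:
  assumes dX: "(X has_vector_derivative X') (at t)" and dY: "(Y has_vector_derivative Y') (at t)"
  shows "((\<lambda>y. lor (X y) (Y y)) has_vector_derivative (lor X' (Y t) + lor (X t) Y')) (at t)"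
proof -
  have cX: "((\<lambda>y. X y $ i) has_vector_derivative X' $ i) (at t)" for i
    using bounded_linear.has_vector_derivative[OF bounded_linear_vec_nth dX] by simp
  have cY: "((\<lambda>y. Y y $ i) has_vector_derivative Y' $ i) (at t)" for i
    using bounded_linear.has_vector_derivative[OF bounded_linear_vec_nth dY] by simp
  have "((\<lambda>y. - (X y $1 * Y y $1) + X y $2 * Y y $2 + X y $3 * Y y $3 + X y $4 * Y y $4)
     has_vector_derivative - (X t $1 * Y' $1 + X' $1 * Y t $1) + (X t $2 * Y' $2 + X' $2 * Y t $2)
       + (X t $3 * Y' $3 + X' $3 * Y t $3) + (X t $4 * Y' $4 + X' $4 * Y t $4)) (at t)"
    by (intro has_vector_derivative_add has_vector_derivative_minus has_vector_derivative_mult cX cY)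
  then show ?thesis unfolding lor_def by (simp add: algebra_simps)
qed

lemma lor_const_deriv:
  assumes dX: "(X has_vector_derivative X') (at t)" and dY: "(Y has_vector_derivative Y') (at t)"
    and "t \<in> S" "t islimpt S" "\<And>y. y \<in> S \<Longrightarrow> lor (X y) (Y y) = c"
  shows "lor X' (Y t) + lor (X t) Y' = 0"
  by (rule vd_eq_within[OF lor_vd[OF dX dY] has_vector_derivative_const assms(3) assms(5) assms(4)])

theorem lemma3p5:
  fixes \<gamma> T N B1 B2 :: "real \<Rightarrow> real \<Rightarrow> real^4"
    and k1 k2 \<beta>1 \<beta>2 \<beta>3 \<beta>4 :: "real \<Rightarrow> real \<Rightarrow> real"
    and l w :: real and U :: "(real \<times> real) set"
  defines "R \<equiv> {0..l} \<times> {0..<w}"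
  assumes "l > 0" and "w > 0"
    and "open U" and "R \<subseteq> U"
    and smooth:
      "smooth_on U (\<lambda>p. \<gamma> (fst p) (snd p))"
      "smooth_on U (\<lambda>p. T (fst p) (snd p))"
      "smooth_on U (\<lambda>p. N (fst p) (snd p))"
      "smooth_on U (\<lambda>p. B1 (fst p) (snd p))"
      "smooth_on U (\<lambda>p. B2 (fst p) (snd p))"
      "smooth_on U (\<lambda>p. k1 (fst p) (snd p))"
      "smooth_on U (\<lambda>p. k2 (fst p) (snd p))"
      "smooth_on U (\<lambda>p. \<beta>1 (fst p) (snd p))"
      "smooth_on U (\<lambda>p. \<beta>2 (fst p) (snd p))"
      "smooth_on U (\<lambda>p. \<beta>3 (fst p) (snd p))"
      "smooth_on U (\<lambda>p. \<beta>4 (fst p) (snd p))"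
    and arclength: "\<And>s t. (s, t) \<in> R \<Longrightarrow> lnorm (d_s \<gamma> s t) = 1"
    and tangent: "\<And>s t. (s, t) \<in> R \<Longrightarrow> T s t = d_s \<gamma> s t"
    and frame: "\<And>s t. (s, t) \<in> R \<Longrightarrow>
        lor (T s t) (T s t) = 1 \<and> lor (N s t) (N s t) = 1 \<and>
        lor (B1 s t) (B1 s t) = 0 \<and> lor (B2 s t) (B2 s t) = 0 \<and>
        lor (B1 s t) (B2 s t) = 1 \<and>
        lor (T s t) (N s t) = 0 \<and> lor (T s t) (B1 s t) = 0 \<and> lor (T s t) (B2 s t) = 0 \<and>
        lor (N s t) (B1 s t) = 0 \<and> lor (N s t) (B2 s t) = 0"
    and frenet: "\<And>s t. (s, t) \<in> R \<Longrightarrow>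
        d_s T s t = k1 s t *\<^sub>R N s t \<and>
        d_s N s t = - k1 s t *\<^sub>R T s t + k2 s t *\<^sub>R B1 s t \<and>
        d_s B1 s t = 0 \<and>
        d_s B2 s t = - k2 s t *\<^sub>R N s t"
    and variation: "\<And>s t. (s, t) \<in> R \<Longrightarrow>
        d_t \<gamma> s t = \<beta>1 s t *\<^sub>R T s t + \<beta>2 s t *\<^sub>R N s t + \<beta>3 s t *\<^sub>R B1 s t + \<beta>4 s t *\<^sub>R B2 s t"
    and inextensible: "\<And>s t. (s, t) \<in> R \<Longrightarrow> d_t (\<lambda>s' t'. lnorm (d_s \<gamma> s' t')) s t = 0"
  shows "\<forall>(s, t) \<in> R.
     (let \<psi>1 = lor (d_t N s t) (B1 s t);
          \<psi>2 = lor (d_t N s t) (B2 s t);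
          \<psi>3 = lor (d_t B1 s t) (B2 s t)
      in d_t T s t = (d_s \<beta>2 s t + \<beta>1 s t * k1 s t - \<beta>4 s t * k2 s t) *\<^sub>R N s t
                     + (d_s \<beta>3 s t + \<beta>2 s t * k2 s t) *\<^sub>R B1 s t
                     + d_s \<beta>4 s t *\<^sub>R B2 s t
       \<and> d_t N s t = - (d_s \<beta>2 s t + \<beta>1 s t * k1 s t - \<beta>4 s t * k2 s t) *\<^sub>R T s t
                     + \<psi>2 *\<^sub>R B1 s t + \<psi>1 *\<^sub>R B2 s t
       \<and> d_t B1 s t = - d_s \<beta>4 s t *\<^sub>R T s t - \<psi>1 *\<^sub>R N s t + \<psi>3 *\<^sub>R B1 s t
       \<and> d_t B2 s t = - (d_s \<beta>3 s t + k2 s t * \<beta>2 s t) *\<^sub>R T s t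
                     - \<psi>2 *\<^sub>R N s t - \<psi>3 *\<^sub>R B2 s t)"
proof (intro ballI, clarify)
  fix s t assume st: "(s,t) \<in> R"
  have stU: "(s,t) \<in> U" using st \<open>R \<subseteq> U\<close> by auto
  have s: "s \<in> {0..l}" and t: "t \<in> {0..<w}" using st unfolding R_def by auto
  have slim: "s islimpt {0..l}" using s \<open>l > 0\<close> by simp
  have tlim: "t islimpt {0..<w}" using t \<open>w > 0\<close> by simp
  have Rt: "(s,y) \<in> R" if "y \<in> {0..<w}" for y using s that unfolding R_def by auto
  have Rs: "(x,t) \<in> R" if "x \<in> {0..l}" for x using t that unfolding R_def by auto
  note fr = frame[OF st]
  have frs: "lor (N s t) (T s t) = 0" "lor (B1 s t) (T s t) = 0" "lor (B2 s t) (T s t) = 0"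
    "lor (B1 s t) (N s t) = 0" "lor (B2 s t) (N s t) = 0" "lor (B2 s t) (B1 s t) = 1"
    using fr by (simp_all add: lor_sym)
  note fre = frenet[OF st]
  have dT: "((\<lambda>y. T s y) has_vector_derivative d_t T s t) (at t)"
    using smooth_partials(2)[OF smooth(2) stU] .
  have dN: "((\<lambda>y. N s y) has_vector_derivative d_t N s t) (at t)"
    using smooth_partials(2)[OF smooth(3) stU] .
  have dB1: "((\<lambda>y. B1 s y) has_vector_derivative d_t B1 s t) (at t)"
    using smooth_partials(2)[OF smooth(4) stU] .
  have dB2: "((\<lambda>y. B2 s y) has_vector_derivative d_t B2 s t) (at t)"
    using smooth_partials(2)[OF smooth(5) stU] .
  have cTT: "lor (d_t T s t) (T s t) + lor (T s t) (d_t T s t) = 0"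
    by (rule lor_const_deriv[OF dT dT t tlim, of 1]) (use frame Rt in auto)
  have cNT: "lor (d_t N s t) (T s t) + lor (N s t) (d_t T s t) = 0"
    by (rule lor_const_deriv[OF dN dT t tlim, of 0]) (use frame Rt lor_sym in metis)
  have cNN: "lor (d_t N s t) (N s t) + lor (N s t) (d_t N s t) = 0"
    by (rule lor_const_deriv[OF dN dN t tlim, of 1]) (use frame Rt in auto)
  have cB1T: "lor (d_t B1 s t) (T s t) + lor (B1 s t) (d_t T s t) = 0"
    by (rule lor_const_deriv[OF dB1 dT t tlim, of 0]) (use frame Rt lor_sym in metis)
  have cB1N: "lor (d_t B1 s t) (N s t) + lor (B1 s t) (d_t N s t) = 0"
    by (rule lor_const_deriv[OF dB1 dN t tlim, of 0]) (use frame Rt lor_sym in metis)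
  have cB1B1: "lor (d_t B1 s t) (B1 s t) + lor (B1 s t) (d_t B1 s t) = 0"
    by (rule lor_const_deriv[OF dB1 dB1 t tlim, of 0]) (use frame Rt in auto)
  have cB2T: "lor (d_t B2 s t) (T s t) + lor (B2 s t) (d_t T s t) = 0"
    by (rule lor_const_deriv[OF dB2 dT t tlim, of 0]) (use frame Rt lor_sym in metis)
  have cB2N: "lor (d_t B2 s t) (N s t) + lor (B2 s t) (d_t N s t) = 0"
    by (rule lor_const_deriv[OF dB2 dN t tlim, of 0]) (use frame Rt lor_sym in metis)
  have cB2B1: "lor (d_t B2 s t) (B1 s t) + lor (B2 s t) (d_t B1 s t) = 0"
    by (rule lor_const_deriv[OF dB2 dB1 t tlim, of 1]) (use frame Rt lor_sym in metis)
  have cB2B2: "lor (d_t B2 s t) (B2 s t) + lor (B2 s t) (d_t B2 s t) = 0"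
    by (rule lor_const_deriv[OF dB2 dB2 t tlim, of 0]) (use frame Rt in auto)
  have C2: "Ck_on (Suc (Suc 0)) U (\<lambda>p. \<gamma> (fst p) (snd p))"
    using smooth(1) unfolding smooth_on_def by blast
  obtain A where A1: "((\<lambda>y. d_s \<gamma> s y) has_vector_derivative A) (at t)"
    and A2: "((\<lambda>x. d_t \<gamma> x t) has_vector_derivative A) (at s)"
    using clairaut[OF C2 \<open>open U\<close> stU] by blast
  have TtA: "d_t T s t = A"
    by (rule vd_eq_within[OF dT A1 t _ tlim]) (use tangent Rt in auto)
  define E where "E = (\<beta>1 s t *\<^sub>R d_s T s t + d_s \<beta>1 s t *\<^sub>R T s t)
      + (\<beta>2 s t *\<^sub>R d_s N s t + d_s \<beta>2 s t *\<^sub>R N s t)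
      + (\<beta>3 s t *\<^sub>R d_s B1 s t + d_s \<beta>3 s t *\<^sub>R B1 s t)
      + (\<beta>4 s t *\<^sub>R d_s B2 s t + d_s \<beta>4 s t *\<^sub>R B2 s t)"
  have rd: "((\<lambda>x. f x t) has_real_derivative d_s f s t) (at s)"
    if "smooth_on U (\<lambda>p. f (fst p) (snd p))" for f :: "real \<Rightarrow> real \<Rightarrow> real"
    using smooth_partials(1)[OF that stU] by (simp add: has_real_derivative_iff_has_vector_derivative)
  have vd: "((\<lambda>x. f x t) has_vector_derivative d_s f s t) (at s)"
    if "smooth_on U (\<lambda>p. f (fst p) (snd p))" for f :: "real \<Rightarrow> real \<Rightarrow> real^4"
    using smooth_partials(1)[OF that stU] .
  have dsum: "((\<lambda>x. \<beta>1 x t *\<^sub>R T x t + \<beta>2 x t *\<^sub>R N x t + \<beta>3 x t *\<^sub>R B1 x t + \<beta>4 x t *\<^sub>R B2 x t)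
     has_vector_derivative E) (at s)"
    unfolding E_def
    by (intro has_vector_derivative_add has_vector_derivative_scaleR rd vd smooth)
  have AE: "A = E"
    by (rule vd_eq_within[OF A2 dsum s _ slim]) (use variation Rs in auto)
  define a where "a = d_s \<beta>2 s t + \<beta>1 s t * k1 s t - \<beta>4 s t * k2 s t"
  define b where "b = d_s \<beta>3 s t + \<beta>2 s t * k2 s t"
  define c where "c = d_s \<beta>4 s t"
  have E2: "E = (d_s \<beta>1 s t - \<beta>2 s t * k1 s t) *\<^sub>R T s t + a *\<^sub>R N s t + b *\<^sub>R B1 s t + c *\<^sub>R B2 s t"
  proof -
    from fre have f1: "d_s T s t = k1 s t *\<^sub>R N s t"
      and f2: "d_s N s t = - k1 s t *\<^sub>R T s t + k2 s t *\<^sub>R B1 s t"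
      and f3: "d_s B1 s t = 0" and f4: "d_s B2 s t = - k2 s t *\<^sub>R N s t" by auto
    show ?thesis unfolding E_def f1 f2 f3 f4 a_def b_def c_def by (simp add: algebra_simps)
  qed
  have "lor (d_t T s t) (T s t) = 0" using cTT lor_sym[of "T s t" "d_t T s t"] by simp
  then have z: "d_s \<beta>1 s t - \<beta>2 s t * k1 s t = 0"
    unfolding TtA AE E2 using fr frs by simp
  have Tt: "d_t T s t = a *\<^sub>R N s t + b *\<^sub>R B1 s t + c *\<^sub>R B2 s t"
    unfolding TtA AE E2 z by simp
  define \<psi>1 where "\<psi>1 = lor (d_t N s t) (B1 s t)"
  define \<psi>2 where "\<psi>2 = lor (d_t N s t) (B2 s t)"
  define \<psi>3 where "\<psi>3 = lor (d_t B1 s t) (B2 s t)"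
  note dec = frame_decomp[OF fr[THEN conjunct1] fr[THEN conjunct2, THEN conjunct1]
      fr[THEN conjunct2, THEN conjunct2, THEN conjunct1]
      fr[THEN conjunct2, THEN conjunct2, THEN conjunct2, THEN conjunct1]
      fr[THEN conjunct2, THEN conjunct2, THEN conjunct2, THEN conjunct2, THEN conjunct1]
      fr[THEN conjunct2, THEN conjunct2, THEN conjunct2, THEN conjunct2, THEN conjunct2, THEN conjunct1]
      fr[THEN conjunct2, THEN conjunct2, THEN conjunct2, THEN conjunct2, THEN conjunct2, THEN conjunct2, THEN conjunct1]
      fr[THEN conjunct2, THEN conjunct2, THEN conjunct2, THEN conjunct2, THEN conjunct2, THEN conjunct2, THEN conjunct2, THEN conjunct1]
      fr[THEN conjunct2, THEN conjunct2, THEN conjunct2, THEN conjunct2, THEN conjunct2, THEN conjunct2, THEN conjunct2, THEN conjunct2, THEN conjunct1]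
      fr[THEN conjunct2, THEN conjunct2, THEN conjunct2, THEN conjunct2, THEN conjunct2, THEN conjunct2, THEN conjunct2, THEN conjunct2, THEN conjunct2]]
  have lNT: "lor (N s t) (d_t T s t) = a" unfolding Tt using fr frs by simp
  have lB1T: "lor (B1 s t) (d_t T s t) = c" unfolding Tt using fr frs by simp
  have lB2T: "lor (B2 s t) (d_t T s t) = b" unfolding Tt using fr frs by simp
  have Nt: "d_t N s t = - a *\<^sub>R T s t + \<psi>2 *\<^sub>R B1 s t + \<psi>1 *\<^sub>R B2 s t"
  proof -
    have "lor (d_t N s t) (T s t) = - a" using cNT lNT by simp
    moreover have "lor (d_t N s t) (N s t) = 0" using cNN lor_sym[of "N s t" "d_t N s t"] by simp
    ultimately show ?thesis using dec[of "d_t N s t"] unfolding \<psi>1_def \<psi>2_def by simp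
  qed
  have B1t: "d_t B1 s t = - c *\<^sub>R T s t - \<psi>1 *\<^sub>R N s t + \<psi>3 *\<^sub>R B1 s t"
  proof -
    have "lor (d_t B1 s t) (T s t) = - c" using cB1T lB1T by simp
    moreover have "lor (d_t B1 s t) (N s t) = - \<psi>1"
      using cB1N lor_sym[of "B1 s t" "d_t N s t"] unfolding \<psi>1_def by simp
    moreover have "lor (d_t B1 s t) (B1 s t) = 0" using cB1B1 lor_sym[of "B1 s t" "d_t B1 s t"] by simp
    ultimately show ?thesis using dec[of "d_t B1 s t"] unfolding \<psi>3_def by (simp add: algebra_simps)
  qed
  have B2t: "d_t B2 s t = - b *\<^sub>R T s t - \<psi>2 *\<^sub>R N s t - \<psi>3 *\<^sub>R B2 s t"
  proof -
    have "lor (d_t B2 s t) (T s t) = - b" using cB2T lB2T by simp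
    moreover have "lor (d_t B2 s t) (N s t) = - \<psi>2"
      using cB2N lor_sym[of "B2 s t" "d_t N s t"] unfolding \<psi>2_def by simp
    moreover have "lor (d_t B2 s t) (B1 s t) = - \<psi>3"
      using cB2B1 lor_sym[of "B2 s t" "d_t B1 s t"] unfolding \<psi>3_def by simp
    moreover have "lor (d_t B2 s t) (B2 s t) = 0" using cB2B2 lor_sym[of "B2 s t" "d_t B2 s t"] by simp
    ultimately have "d_t B2 s t = (- b) *\<^sub>R T s t + (- \<psi>2) *\<^sub>R N s t + 0 *\<^sub>R B1 s t + (- \<psi>3) *\<^sub>R B2 s t"
      using dec[of "d_t B2 s t"] by (simp only:)
    then show ?thesis by simp
  qed
  have b': "d_s \<beta>3 s t + k2 s t * \<beta>2 s t = b" unfolding b_def by simp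
  show "let \<psi>1 = lor (d_t N s t) (B1 s t);
          \<psi>2 = lor (d_t N s t) (B2 s t);
          \<psi>3 = lor (d_t B1 s t) (B2 s t)
      in d_t T s t = (d_s \<beta>2 s t + \<beta>1 s t * k1 s t - \<beta>4 s t * k2 s t) *\<^sub>R N s t
                     + (d_s \<beta>3 s t + \<beta>2 s t * k2 s t) *\<^sub>R B1 s t
                     + d_s \<beta>4 s t *\<^sub>R B2 s t
       \<and> d_t N s t = - (d_s \<beta>2 s t + \<beta>1 s t * k1 s t - \<beta>4 s t * k2 s t) *\<^sub>R T s t
                     + \<psi>2 *\<^sub>R B1 s t + \<psi>1 *\<^sub>R B2 s t
       \<and> d_t B1 s t = - d_s \<beta>4 s t *\<^sub>R T s t - \<psi>1 *\<^sub>R N s t + \<psi>3 *\<^sub>R B1 s t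
       \<and> d_t B2 s t = - (d_s \<beta>3 s t + k2 s t * \<beta>2 s t) *\<^sub>R T s t
                     - \<psi>2 *\<^sub>R N s t - \<psi>3 *\<^sub>R B2 s t"
    unfolding Let_def b' using Tt Nt B1t B2t
    unfolding a_def[symmetric] b_def[symmetric] c_def[symmetric] \<psi>1_def \<psi>2_def \<psi>3_def
    by simp
qed


end
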